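(* Let $f : X \to \mathbb{R}$. The following conditions are equivalent: (C1) $f$ is a limsup function; (C2) there is a sequence $g_0, g_1, \dots$ of lower semicontinuous functions $X \to \mathbb{R}$ converging pointwise to $f$; (C3) there is a non-increasing sequence $g_0 \ge g_1 \ge \cdots$ of lower semicontinuous functions $X \to \mathbb{R}$ converging pointwise to $f$; (C4) the subgraph $\mathrm{subgr}(f) = \{(x,r) \in X \times \mathbb{R} : f(x) \ge r\}$ is a $\mathbf{\Pi}^0_2$ (i.e. $G_\delta$) subset of $X \times \mathbb{R}$; (C5) for each $r \in \mathbb{R}$, the set $\{f \ge r\} = \{x \in X : f(x) \ge r\}$ is a $\mathbf{\Pi}^0_2$ subset of $X$.
   Context: Let $A$ be a non-empty countable set and $T$ a pruned tree on $A$ (a set of finite sequences of elements of $A$, closed under initial segments, in which every sequence has a proper extension in $T$). Let $X$ be the set of infinite branches of $T$, i.e. the sequences $x = (x_0, x_1, \dots) \in A^{\mathbb{N}}$ with $(x_0,\dots,x_t) \in T$ for all $t \in \mathbb{N}$. For $s \in T$, $O(s)$ denotes the set of $x \in X$ having $s$ as an initial segment; $X$ carries the topology generated by the base $\{O(s) : s \in T\}$. A function $f : X \to \mathbb{R}$ is a limsup function if there exists $u : T \to \mathbb{R}$ with $f(x) = \limsup_{t\to\infty} u(x_0,\dots,x_t)$ for every $x \in X$. *)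

theory Defs
  imports "HOL-Analysis.Analysis" "HOL-Library.Liminf_Limsup"
begin

definition pruned_tree :: "'a list set \<Rightarrow> bool" where
  "pruned_tree T \<longleftrightarrow>
     (\<forall>s\<in>T. \<forall>n. take n s \<in> T) \<and>
     (\<forall>s\<in>T. \<exists>s'\<in>T. length s < length s' \<and> take (length s) s' = s)"

definition branches :: "'a list set \<Rightarrow> (nat \<Rightarrow> 'a) set" where
  "branches T = {x. \<forall>t. map x [0..<Suc t] \<in> T}"

definition O_set :: "'a list set \<Rightarrow> 'a list \<Rightarrow> (nat \<Rightarrow> 'a) set" where
  "O_set T s = {x \<in> branches T. map x [0..<length s] = s}"

definition tree_topology :: "'a list set \<Rightarrow> (nat \<Rightarrow> 'a) topology" where
  "tree_topology T = topology_generated_by {O_set T s | s. s \<in> T}"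

definition limsup_function :: "'a list set \<Rightarrow> ((nat \<Rightarrow> 'a) \<Rightarrow> real) \<Rightarrow> bool" where
  "limsup_function T f \<longleftrightarrow>
     (\<exists>u :: 'a list \<Rightarrow> real. \<forall>x \<in> branches T.
        limsup (\<lambda>t. ereal (u (map x [0..<Suc t]))) = ereal (f x))"

definition lsc_on :: "'b topology \<Rightarrow> ('b \<Rightarrow> real) \<Rightarrow> bool" where
  "lsc_on X g \<longleftrightarrow> (\<forall>r. openin X {x \<in> topspace X. r < g x})"

definition subgraph :: "'b set \<Rightarrow> ('b \<Rightarrow> real) \<Rightarrow> ('b \<times> real) set" where
  "subgraph X f = {(x, r). x \<in> X \<and> r \<le> f x}"

end

theory Submission
  imports Defs
begin


lemma pref_eq: "map y [0..<t] = map x [0..<t] \<longleftrightarrow> (\<forall>i<t. y i = x i)"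
  by (auto simp: map_eq_conv)

lemma pref_in_T:
  assumes "pruned_tree T" "x \<in> branches T" shows "map x [0..<t] \<in> T"
proof -
  have "map x [0..<Suc t] \<in> T" using assms(2) by (simp add: branches_def)
  then have "take t (map x [0..<Suc t]) \<in> T" using assms(1) unfolding pruned_tree_def by blast
  then show ?thesis by (simp add: take_map)
qed

lemma mem_O_set: "y \<in> O_set T s \<longleftrightarrow> y \<in> branches T \<and> map y [0..<length s] = s"
  by (simp add: O_set_def)

lemma O_antimono: "t \<le> t' \<Longrightarrow> O_set T (map x [0..<t']) \<subseteq> O_set T (map x [0..<t])"
  by (auto simp: mem_O_set pref_eq)

lemma mem_O_pref: "x \<in> branches T \<Longrightarrow> x \<in> O_set T (map x [0..<t])"
  by (simp add: mem_O_set)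

lemma topspace_tau:
  assumes "pruned_tree T" shows "topspace (tree_topology T) = branches T"
proof
  show "topspace (tree_topology T) \<subseteq> branches T"
    by (auto simp: tree_topology_def O_set_def)
  show "branches T \<subseteq> topspace (tree_topology T)"
  proof
    fix x assume x: "x \<in> branches T"
    have "map x [0..<0] \<in> T" using pref_in_T[OF assms x] .
    then show "x \<in> topspace (tree_topology T)"
      using mem_O_pref[OF x, of 0] unfolding tree_topology_def by auto
  qed
qed

lemma open_O: "s \<in> T \<Longrightarrow> openin (tree_topology T) (O_set T s)"
  unfolding tree_topology_def by (rule topology_generated_by_Basis) auto

lemma nbhd:
  assumes "openin (tree_topology T) U" "x \<in> U"
  shows "\<exists>t. O_set T (map x [0..<t]) \<subseteq> U"
proof -
  have "generate_topology_on {O_set T s | s. s \<in> T} U"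
    using assms(1) unfolding tree_topology_def by (rule openin_topology_generated_by)
  then have "\<forall>x\<in>U. \<exists>t. O_set T (map x [0..<t]) \<subseteq> U"
  proof induction
    case Empty then show ?case by simp
  next
    case (Int a b)
    show ?case
    proof
      fix x assume "x \<in> a \<inter> b"
      then obtain t1 t2 where "O_set T (map x [0..<t1]) \<subseteq> a" "O_set T (map x [0..<t2]) \<subseteq> b"
        using Int.IH by blast
      then have "O_set T (map x [0..<max t1 t2]) \<subseteq> a \<inter> b"
        using O_antimono[of t1 "max t1 t2" T x] O_antimono[of t2 "max t1 t2" T x] by auto
      then show "\<exists>t. O_set T (map x [0..<t]) \<subseteq> a \<inter> b" ..
    qed
  next
    case (UN K)
    then show ?case by blast
  next
    case (Basis s)
    show ?case
    proof
      fix x assume "x \<in> s"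
      with Basis obtain s' where s': "s = O_set T s'" by auto
      with \<open>x \<in> s\<close> have "map x [0..<length s'] = s'" by (simp add: mem_O_set)
      then have "O_set T (map x [0..<length s']) \<subseteq> s" using s' by simp
      then show "\<exists>t. O_set T (map x [0..<t]) \<subseteq> s" ..
    qed
  qed
  then show ?thesis using assms(2) by blast
qed

lemma open_Union_O:
  assumes "\<And>V. V \<in> S \<Longrightarrow> \<exists>s\<in>T. V = O_set T s"
  shows "openin (tree_topology T) (\<Union>S)"
  using assms open_O by (metis openin_Union)



lemma c1_c3:
  assumes pr: "pruned_tree T" and c1: "limsup_function T f"
  shows "\<exists>g :: nat \<Rightarrow> (nat \<Rightarrow> 'a) \<Rightarrow> real. (\<forall>n. lsc_on (tree_topology T) (g n)) \<and>
     (\<forall>n. \<forall>x\<in>branches T. g (Suc n) x \<le> g n x) \<and> (\<forall>x\<in>branches T. (\<lambda>n. g n x) \<longlonglongrightarrow> f x)"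
proof -
  obtain u :: "'a list \<Rightarrow> real" where u: "\<And>x. x \<in> branches T \<Longrightarrow>
      limsup (\<lambda>t. ereal (u (map x [0..<Suc t]))) = ereal (f x)"
    using c1 unfolding limsup_function_def by blast
  define a where "a x t = ereal (u (map x [0..<Suc t]))" for x t
  define S where "S n x = (SUP t\<in>{n..}. a x t)" for n x
  define g where "g n x = real_of_ereal (S n x)" for n x
  have lim: "limsup (a x) = (INF n. S n x)" for x
    unfolding S_def by (rule limsup_INF_SUP)
  have fin: "S n x = ereal (g n x)" if x: "x \<in> branches T" for n x
  proof -
    have "a x n \<le> S n x" unfolding S_def by (rule SUP_upper) auto
    then have m: "S n x \<noteq> -\<infinity>" unfolding a_def by auto
    have "(INF n. S n x) = ereal (f x)" using u[OF x] lim[of x] unfolding a_def by simp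
    then have "(INF n. S n x) < \<infinity>" by simp
    then obtain N where N: "S N x < \<infinity>" by (subst (asm) INF_less_iff) auto
    define B where "B = (\<Sum>t<N. \<bar>u (map x [0..<Suc t])\<bar>)"
    have "a x t \<le> max (S N x) (ereal B)" if "t \<ge> n" for t
    proof (cases "t < N")
      case True
      have "u (map x [0..<Suc t]) \<le> \<bar>u (map x [0..<Suc t])\<bar>" by simp
      also have "\<dots> \<le> B" unfolding B_def
        by (rule member_le_sum[where f="\<lambda>t. \<bar>u (map x [0..<Suc t])\<bar>"]) (use True in auto)
      finally have "a x t \<le> ereal B" unfolding a_def by simp
      then show ?thesis by (simp add: le_max_iff_disj)
    next
      case False
      then have "a x t \<le> S N x" unfolding S_def by (intro SUP_upper) auto
      then show ?thesis by (simp add: le_max_iff_disj)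
    qed
    then have "S n x \<le> max (S N x) (ereal B)" unfolding S_def by (intro SUP_least) auto
    also have "\<dots> < \<infinity>" using N by (simp add: max_def)
    finally have "S n x \<noteq> \<infinity>" by simp
    with m show ?thesis unfolding g_def by (cases "S n x") auto
  qed
  have "lsc_on (tree_topology T) (g n)" for n
  proof -
    have eq: "{x \<in> topspace (tree_topology T). r < g n x} =
       \<Union>{O_set T s |s. s \<in> T \<and> n < length s \<and> r < u s}" for r
    proof (intro equalityI subsetI)
      fix x assume "x \<in> {x \<in> topspace (tree_topology T). r < g n x}"
      then have x: "x \<in> branches T" and r: "ereal r < S n x" using topspace_tau[OF pr] fin by auto
      then obtain t where t: "t \<ge> n" "ereal r < a x t" unfolding S_def by (auto simp: less_SUP_iff)
      then have "x \<in> O_set T (map x [0..<Suc t])" "map x [0..<Suc t] \<in> T" "n < length (map x [0..<Suc t])"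
        "r < u (map x [0..<Suc t])"
        using mem_O_pref[OF x] pref_in_T[OF pr x] unfolding a_def by (auto simp del: upt_Suc)
      then show "x \<in> \<Union>{O_set T s |s. s \<in> T \<and> n < length s \<and> r < u s}" by blast
    next
      fix y assume "y \<in> \<Union>{O_set T s |s. s \<in> T \<and> n < length s \<and> r < u s}"
      then obtain s where s: "s \<in> T" "n < length s" "r < u s" "y \<in> O_set T s" by blast
      then have y: "y \<in> branches T" and ys: "map y [0..<length s] = s" by (auto simp: mem_O_set)
      obtain t where t: "length s = Suc t" using s(2) by (cases "length s") auto
      have "ereal r < a y t" unfolding a_def using ys t s(3) by simp
      moreover have "t \<ge> n" using t s(2) by simp
      ultimately have "ereal r < S n y" unfolding S_def by (auto simp: less_SUP_iff)
      then show "y \<in> {x \<in> topspace (tree_topology T). r < g n x}"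
        using fin[OF y] y topspace_tau[OF pr] by auto
    qed
    show ?thesis unfolding lsc_on_def eq by (intro allI open_Union_O) blast
  qed
  moreover have "\<forall>n. \<forall>x\<in>branches T. g (Suc n) x \<le> g n x"
  proof (intro allI ballI)
    fix n x assume x: "x \<in> branches T"
    have "S (Suc n) x \<le> S n x" unfolding S_def by (rule SUP_subset_mono) auto
    then show "g (Suc n) x \<le> g n x" using fin[OF x] by (metis ereal_less_eq(3))
  qed
  moreover have "\<forall>x\<in>branches T. (\<lambda>n. g n x) \<longlonglongrightarrow> f x"
  proof
    fix x assume x: "x \<in> branches T"
    have "decseq (\<lambda>n. S n x)" unfolding S_def decseq_def by (auto intro: SUP_subset_mono)
    then have "(\<lambda>n. S n x) \<longlonglongrightarrow> (INF n. S n x)" by (rule LIMSEQ_INF)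
    also have "(INF n. S n x) = ereal (f x)" using u[OF x] lim[of x] unfolding a_def by simp
    finally have "(\<lambda>n. ereal (g n x)) \<longlonglongrightarrow> ereal (f x)" using fin[OF x] by simp
    then show "(\<lambda>n. g n x) \<longlonglongrightarrow> f x" by simp
  qed
  ultimately show ?thesis by blast
qed



lemma mid1: "(a::real) < b \<Longrightarrow> (a+b)/2 < b" by simp
lemma mid2: "(r::real) - d < b \<Longrightarrow> r < (r - d + b)/2 + d" by (simp add: field_simps)

lemma c2_c4:
  assumes pr: "pruned_tree T" and g: "\<forall>n. lsc_on (tree_topology T) (g n)"
    and conv: "\<forall>x\<in>branches T. (\<lambda>n. g n x) \<longlonglongrightarrow> f x"
  shows "gdelta_in (prod_topology (tree_topology T) euclideanreal) (subgraph (branches T) f)"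
proof -
  let ?\<tau> = "tree_topology T"
  let ?X = "branches T"
  define G where "G n k = {(x,r). x \<in> ?X \<and> r - 1/Suc k < g n x}" for n k :: nat
  define H where "H k N = (\<Union>n\<in>{N..}. G n k)" for k N :: nat
  have Gopen: "openin (prod_topology ?\<tau> euclideanreal) (G n k)" for n k
  proof -
    have eq: "G n k = (\<Union>q. {x \<in> topspace ?\<tau>. q < g n x} \<times> {..< q + 1/Suc k})"
    proof (intro equalityI subsetI)
      fix p assume "p \<in> G n k"
      then obtain x r where p: "p = (x,r)" "x \<in> ?X" "r - 1/Suc k < g n x" unfolding G_def by auto
      define q where "q = (r - 1/Suc k + g n x)/2"
      have q1: "q < g n x" unfolding q_def using mid1[OF p(3)] .
      have q2: "r < q + 1/Suc k" unfolding q_def using mid2[OF p(3)] .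
      have "x \<in> {x \<in> topspace ?\<tau>. q < g n x}" "r \<in> {..< q + 1/Suc k}"
        using q1 q2 p topspace_tau[OF pr] by auto
      then show "p \<in> (\<Union>q. {x \<in> topspace ?\<tau>. q < g n x} \<times> {..< q + 1/Suc k})" using p by blast
    next
      fix p assume "p \<in> (\<Union>q. {x \<in> topspace ?\<tau>. q < g n x} \<times> {..< q + 1/Suc k})"
      then show "p \<in> G n k" unfolding G_def using topspace_tau[OF pr] by force
    qed
    show ?thesis unfolding eq
      using g unfolding lsc_on_def by (intro openin_Union) (auto simp: openin_prod_Times_iff)
  qed
  have Hopen: "openin (prod_topology ?\<tau> euclideanreal) (H k N)" for k N
    unfolding H_def using Gopen by blast
  have eq: "subgraph ?X f = \<Inter>(range (\<lambda>(k,N). H k N))"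
  proof (intro equalityI subsetI)
    fix p assume "p \<in> subgraph ?X f"
    then obtain x r where p: "p = (x,r)" "x \<in> ?X" "r \<le> f x" unfolding subgraph_def by auto
    have "p \<in> H k N" for k N
    proof -
      have "r - 1/Suc k < f x" using p(3) by (smt (verit) of_nat_0_less_iff zero_less_Suc divide_pos_pos)
      then have "eventually (\<lambda>n. r - 1/Suc k < g n x) sequentially"
        using conv p(2) by (auto intro: order_tendstoD(1))
      then obtain M where M: "\<And>n. n \<ge> M \<Longrightarrow> r - 1/Suc k < g n x" by (auto simp: eventually_sequentially)
      have "p \<in> G (max N M) k" unfolding G_def using p M[of "max N M"] by auto
      then show ?thesis unfolding H_def by auto
    qed
    then show "p \<in> \<Inter>(range (\<lambda>(k,N). H k N))" by auto
  next
    fix p assume pin: "p \<in> \<Inter>(range (\<lambda>(k,N). H k N))"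
    obtain x r where p: "p = (x,r)" by (cases p)
    have H: "p \<in> H k N" for k N using pin by auto
    from H[of 0 0] have x: "x \<in> ?X" unfolding H_def G_def p by auto
    have "r \<le> f x"
    proof (rule ccontr)
      assume "\<not> r \<le> f x"
      define e where "e = (r - f x)/2"
      have e: "e > 0" using \<open>\<not> r \<le> f x\<close> unfolding e_def by simp
      obtain k where k: "inverse (real (Suc k)) < e" using reals_Archimedean[OF e] by blast
      have "eventually (\<lambda>n. g n x < f x + e) sequentially"
        using conv x e by (auto intro: order_tendstoD(2))
      then obtain M where M: "\<And>n. n \<ge> M \<Longrightarrow> g n x < f x + e" by (auto simp: eventually_sequentially)
      from H[of k M] obtain n where "n \<ge> M" "r - 1/Suc k < g n x" unfolding H_def G_def p by auto
      moreover have "1/real (Suc k) < e" using k by (simp add: inverse_eq_divide)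
      moreover have "r - f x = 2*e" unfolding e_def by simp
      ultimately show False using M[of n] by linarith
    qed
    then show "p \<in> subgraph ?X f" unfolding subgraph_def p using x by auto
  qed
  show ?thesis unfolding eq
    by (rule gdelta_in_Inter) (use Hopen in \<open>auto intro: open_imp_gdelta_in\<close>)
qed

lemma c4_c5:
  assumes pr: "pruned_tree T"
    and c4: "gdelta_in (prod_topology (tree_topology T) euclideanreal) (subgraph (branches T) f)"
  shows "gdelta_in (tree_topology T) {x \<in> branches T. r \<le> f x}"
proof -
  let ?\<tau> = "tree_topology T"
  obtain C where C: "\<And>n. openin (prod_topology ?\<tau> euclideanreal) (C n)" "\<And>n. C (Suc n) \<subseteq> C n"
    "\<Inter>(range C) = subgraph (branches T) f"
    using c4 unfolding gdelta_in_descending by metis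
  define D where "D n = {x \<in> topspace ?\<tau>. (x, r) \<in> C n}" for n
  have cm: "continuous_map ?\<tau> (prod_topology ?\<tau> euclideanreal) (\<lambda>x. (x, r))"
    by (rule continuous_map_pairedI[OF continuous_map_id[unfolded id_def]]) (simp add: continuous_map_const)
  have "openin ?\<tau> (D n)" for n unfolding D_def
    by (rule openin_continuous_map_preimage[OF cm C(1)])
  moreover have "D (Suc n) \<subseteq> D n" for n unfolding D_def using C(2) by auto
  moreover have "\<Inter>(range D) = {x \<in> branches T. r \<le> f x}"
  proof -
    have "x \<in> \<Inter>(range D) \<longleftrightarrow> x \<in> topspace ?\<tau> \<and> (x, r) \<in> \<Inter>(range C)" for x
      unfolding D_def by auto
    then show ?thesis using C(3) topspace_tau[OF pr] unfolding subgraph_def by auto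
  qed
  ultimately show ?thesis unfolding gdelta_in_descending by metis
qed



lemma limsup_geI:
  fixes a :: "nat \<Rightarrow> ereal"
  assumes "\<And>N. \<exists>t\<ge>N. c \<le> a t" shows "c \<le> limsup a"
  unfolding limsup_INF_SUP
proof (rule INF_greatest)
  fix N :: nat
  obtain t where "t \<ge> N" "c \<le> a t" using assms by blast
  then show "c \<le> (SUP m\<in>{N..}. a m)" by (intro SUP_upper2[of t]) auto
qed

lemma limsup_gtD:
  fixes a :: "nat \<Rightarrow> ereal"
  assumes "c < limsup a" shows "\<exists>t\<ge>N. c < a t"
proof -
  have "c < (SUP m\<in>{N..}. a m)" using assms unfolding limsup_INF_SUP by (rule less_INF_D) simp
  then show ?thesis by (auto simp: less_SUP_iff)
qed

lemma q_dense:
  fixes a b :: real assumes "a < b"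
  shows "\<exists>i. a < of_rat (from_nat i) \<and> of_rat (from_nat i) < b"
proof -
  obtain r where "r \<in> \<rat>" "a < r" "r < b" using Rats_dense_in_real[OF assms(1)] by blast
  then obtain r' where "r = of_rat r'" by (auto elim: Rats_cases)
  then have "r = of_rat (from_nat (to_nat r'))" by simp
  then show ?thesis using \<open>a < r\<close> \<open>r < b\<close> by metis
qed

lemma c5_c1:
  fixes T :: "('a :: countable) list set"
  assumes pr: "pruned_tree T"
    and c5: "\<forall>r::real. gdelta_in (tree_topology T) {x \<in> branches T. r \<le> f x}"
  shows "limsup_function T f"
proof -
  let ?\<tau> = "tree_topology T"
  let ?X = "branches T"
  have "\<forall>r. \<exists>C. (\<forall>n. openin ?\<tau> (C n)) \<and> (\<forall>n. C (Suc n) \<subseteq> C n) \<and> \<Inter>(range C) = {x \<in> ?X. r \<le> f x}"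
    using c5 unfolding gdelta_in_descending by blast
  then obtain C where C: "\<And>r n. openin ?\<tau> (C r n)" "\<And>r n. C r (Suc n) \<subseteq> C r n"
    "\<And>r. \<Inter>(range (C r)) = {x \<in> ?X. r \<le> f x}"
    by metis
  have Cdec: "n \<le> m \<Longrightarrow> C r m \<subseteq> C r n" for r n m
    using lift_Suc_antimono_le[of "C r"] C(2) by blast
  define q :: "nat \<Rightarrow> real" where "q i = of_rat (from_nat i)" for i
  have qd: "a < b \<Longrightarrow> \<exists>i. a < q i \<and> q i < b" for a b unfolding q_def by (rule q_dense)
  define J where "J i k = {j. j \<le> k \<and> q j \<le> q i}" for i k
  define W where "W i k = (\<Inter>j\<in>J i k. C (q j) k) \<inter> topspace ?\<tau>" for i k
  have Wopen: "openin ?\<tau> (W i k)" for i k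
    unfolding W_def by (rule openin_INT) (auto simp: J_def C(1))
  have W3: "i \<le> k \<Longrightarrow> W i k \<subseteq> C (q i) k" for i k
    unfolding W_def J_def by auto
  have W4: "x \<in> ?X \<Longrightarrow> q i \<le> f x \<Longrightarrow> x \<in> W i k" for x i k
  proof -
    assume x: "x \<in> ?X" "q i \<le> f x"
    have "x \<in> C (q j) k" if "j \<in> J i k" for j
    proof -
      have "x \<in> {x \<in> ?X. q j \<le> f x}" using that x unfolding J_def by auto
      then show ?thesis using C(3)[of "q j"] by blast
    qed
    then show ?thesis unfolding W_def using x topspace_tau[OF pr] by auto
  qed
  have W5: "m \<le> k \<Longrightarrow> q m \<le> q i \<Longrightarrow> W i k \<subseteq> W m k" for m k i
    unfolding W_def J_def by auto
  define ev where "ev i s \<longleftrightarrow> (\<exists>k. i \<le> k \<and> k \<le> length s \<and> O_set T s \<subseteq> W i k \<and>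
      \<not> (k \<le> length s - 1 \<and> O_set T (butlast s) \<subseteq> W i k))" for i s
  define u where "u s = Max ({- real (length s)} \<union> q ` {i. i \<le> length s \<and> ev i s})" for s
  have ufin: "finite ({- real (length s)} \<union> q ` {i. i \<le> length s \<and> ev i s})" for s by simp
  have u1: "i \<le> length s \<Longrightarrow> ev i s \<Longrightarrow> q i \<le> u s" for i s
    unfolding u_def by (rule Max_ge[OF ufin]) auto
  have u3: "u s = - real (length s) \<or> (\<exists>i. i \<le> length s \<and> ev i s \<and> u s = q i)" for s
  proof -
    have "u s \<in> ({- real (length s)} \<union> q ` {i. i \<le> length s \<and> ev i s})"
      unfolding u_def by (rule Max_in[OF ufin]) auto
    then show ?thesis by auto
  qed
  have evp: "ev i (map x [0..<Suc t]) \<longleftrightarrow> (\<exists>k. i \<le> k \<and> k \<le> Suc t \<and>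
      O_set T (map x [0..<Suc t]) \<subseteq> W i k \<and> \<not> (k \<le> t \<and> O_set T (map x [0..<t]) \<subseteq> W i k))" for i x t
  proof -
    have "butlast (map x [0..<Suc t]) = map x [0..<t]" by simp
    then show ?thesis unfolding ev_def by simp
  qed
  show ?thesis unfolding limsup_function_def
  proof (intro exI ballI)
    fix x assume x: "x \<in> ?X"
    define a where "a t = ereal (u (map x [0..<Suc t]))" for t
    have L: "\<exists>t\<ge>N. q i \<le> u (map x [0..<Suc t])" if qi: "q i \<le> f x" for i N
    proof -
      define K where "K = max i (Suc N)"
      have "x \<in> W i K" using W4[OF x qi] .
      then obtain t0 where t0: "O_set T (map x [0..<t0]) \<subseteq> W i K" using nbhd[OF Wopen] by blast
      define P where "P t \<longleftrightarrow> K \<le> t \<and> O_set T (map x [0..<t]) \<subseteq> W i K" for t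
      have "P (max t0 K)" unfolding P_def using O_antimono[of t0 "max t0 K" T x] t0 by auto
      then have P1: "P (LEAST t. P t)" by (rule LeastI)
      have "K \<le> (LEAST t. P t)" using P1 unfolding P_def by simp
      then obtain t where t: "(LEAST t. P t) = Suc t" unfolding K_def
        by (cases "(LEAST t. P t)") auto
      have nP: "\<not> P t" using not_less_Least[of t P] t by simp
      have "ev i (map x [0..<Suc t])" unfolding evp
        using P1 nP t unfolding P_def K_def by (intro exI[of _ K]) (auto simp: K_def simp del: upt_Suc)
      moreover have "i \<le> Suc t" "N \<le> t" using \<open>K \<le> (LEAST t. P t)\<close> t unfolding K_def by auto
      ultimately show ?thesis using u1[of i "map x [0..<Suc t]"] by (intro exI[of _ t]) auto
    qed
    have U: "False" if fm: "f x < q m" and fr: "\<And>N. \<exists>t\<ge>N. q m < u (map x [0..<Suc t])" for m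
    proof -
      define N0 where "N0 = nat \<lceil>- q m\<rceil>"
      define E where "E = {t. N0 \<le> t \<and> q m < u (map x [0..<Suc t])}"
      have Einf: "infinite E" unfolding infinite_nat_iff_unbounded_le E_def
      proof
        fix N obtain t where "t \<ge> max N N0" "q m < u (map x [0..<Suc t])" using fr by blast
        then show "\<exists>t\<ge>N. t \<in> {t. N0 \<le> t \<and> q m < u (map x [0..<Suc t])}" by auto
      qed
      define Q where "Q t i k \<longleftrightarrow> q m \<le> q i \<and> i \<le> k \<and> k \<le> Suc t \<and>
          O_set T (map x [0..<Suc t]) \<subseteq> W i k \<and> \<not> (k \<le> t \<and> O_set T (map x [0..<t]) \<subseteq> W i k)" for t i k
      have "\<exists>i k. Q t i k" if "t \<in> E" for t
      proof -
        have t: "N0 \<le> t" "q m < u (map x [0..<Suc t])" using that unfolding E_def by auto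
        have "- real (Suc t) < q m" using t(1) unfolding N0_def by linarith
        then have "u (map x [0..<Suc t]) \<noteq> - real (length (map x [0..<Suc t]))" using t(2) by simp
        then obtain i where i: "ev i (map x [0..<Suc t])" "u (map x [0..<Suc t]) = q i"
          using u3[of "map x [0..<Suc t]"] by auto
        from i(1) obtain k where k: "i \<le> k" "k \<le> Suc t" "O_set T (map x [0..<Suc t]) \<subseteq> W i k"
          "\<not> (k \<le> t \<and> O_set T (map x [0..<t]) \<subseteq> W i k)" unfolding evp by blast
        have "Q t i k" unfolding Q_def using k t(2) i(2) by (simp del: upt_Suc)
        then show ?thesis by blast
      qed
      then obtain I K where IK: "\<And>t. t \<in> E \<Longrightarrow> Q t (I t) (K t)" by metis
      have inj: "inj_on (\<lambda>t. (I t, K t)) E"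
      proof -
        have "False" if "t \<in> E" "t' \<in> E" "t < t'" "I t = I t'" "K t = K t'" for t t'
        proof -
          have "O_set T (map x [0..<t']) \<subseteq> O_set T (map x [0..<Suc t])"
            using O_antimono that(3) by (metis Suc_leI)
          then show False using IK[OF that(1)] IK[OF that(2)] that unfolding Q_def by auto
        qed
        then show ?thesis unfolding inj_on_def by (metis nat_neq_iff prod.inject)
      qed
      have unb: "\<exists>t\<in>E. B < K t" for B
      proof (rule ccontr)
        assume "\<not> (\<exists>t\<in>E. B < K t)"
        then have "(\<lambda>t. (I t, K t)) ` E \<subseteq> {..B} \<times> {..B}" using IK unfolding Q_def by force
        then have "finite ((\<lambda>t. (I t, K t)) ` E)" by (rule finite_subset) simp
        then show False using finite_imageD[OF _ inj] Einf by blast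
      qed
      have "x \<in> C (q m) n" for n
      proof -
        obtain t where t: "t \<in> E" "max n m < K t" using unb by blast
        have "x \<in> O_set T (map x [0..<Suc t])" by (rule mem_O_pref[OF x])
        also have "\<dots> \<subseteq> W (I t) (K t)" using IK[OF t(1)] unfolding Q_def by auto
        also have "\<dots> \<subseteq> W m (K t)" using IK[OF t(1)] t(2) unfolding Q_def by (intro W5) auto
        also have "\<dots> \<subseteq> C (q m) (K t)" using t(2) by (intro W3) auto
        also have "\<dots> \<subseteq> C (q m) n" using t(2) by (intro Cdec) auto
        finally show ?thesis .
      qed
      then have "x \<in> \<Inter>(range (C (q m)))" by auto
      then have "q m \<le> f x" using C(3) by auto
      then show False using fm by simp
    qed
    have "limsup a \<le> ereal (f x)"
    proof (rule ccontr)
      assume "\<not> limsup a \<le> ereal (f x)"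
      then obtain z where z: "ereal (f x) < ereal z" "ereal z < limsup a"
        using ereal_dense2 by (metis not_le)
      then obtain m where m: "f x < q m" "q m < z" using qd by auto
      have "ereal (q m) < ereal z" using m(2) by simp
      then have "ereal (q m) < limsup a" using z(2) by (rule less_trans)
      then have "\<exists>t\<ge>N. q m < u (map x [0..<Suc t])" for N
        using limsup_gtD[of "ereal (q m)" a N] unfolding a_def by auto
      then show False using U[OF m(1)] by blast
    qed
    moreover have "ereal (f x) \<le> limsup a"
    proof (rule ccontr)
      assume "\<not> ereal (f x) \<le> limsup a"
      then obtain z where z: "limsup a < ereal z" "ereal z < ereal (f x)"
        using ereal_dense2 by (metis not_le)
      then obtain i where i: "z < q i" "q i < f x" using qd by auto
      have "ereal (q i) \<le> limsup a"
        using L[of i] i(2) unfolding a_def by (intro limsup_geI) auto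
      then show False using z(1) i(1) by (metis ereal_less_eq(3) leD less_imp_le order.strict_trans1)
    qed
    ultimately show "limsup (\<lambda>t. ereal (u (map x [0..<Suc t]))) = ereal (f x)"
      unfolding a_def by (rule antisym)
  qed
qed

theorem mainTheorem1:
  fixes T :: "('a :: countable) list set"
    and f :: "(nat \<Rightarrow> 'a) \<Rightarrow> real"
  assumes "pruned_tree T"
  defines "X \<equiv> branches T"
      and "\<tau> \<equiv> tree_topology T"
  defines "C1 \<equiv> limsup_function T f"
      and "C2 \<equiv> (\<exists>g :: nat \<Rightarrow> (nat \<Rightarrow> 'a) \<Rightarrow> real.
                  (\<forall>n. lsc_on \<tau> (g n)) \<and> (\<forall>x\<in>X. (\<lambda>n. g n x) \<longlonglongrightarrow> f x))"
      and "C3 \<equiv> (\<exists>g :: nat \<Rightarrow> (nat \<Rightarrow> 'a) \<Rightarrow> real.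
                  (\<forall>n. lsc_on \<tau> (g n)) \<and> (\<forall>n. \<forall>x\<in>X. g (Suc n) x \<le> g n x) \<and>
                  (\<forall>x\<in>X. (\<lambda>n. g n x) \<longlonglongrightarrow> f x))"
      and "C4 \<equiv> gdelta_in (prod_topology \<tau> euclideanreal) (subgraph X f)"
      and "C5 \<equiv> (\<forall>r::real. gdelta_in \<tau> {x \<in> X. r \<le> f x})"
  shows "(C1 \<longleftrightarrow> C2) \<and> (C2 \<longleftrightarrow> C3) \<and> (C3 \<longleftrightarrow> C4) \<and> (C4 \<longleftrightarrow> C5)"
proof -
  have 13: "C1 \<Longrightarrow> C3" unfolding C1_def C3_def \<tau>_def X_def using c1_c3[OF assms(1)] by blast
  have 32: "C3 \<Longrightarrow> C2" unfolding C2_def C3_def by blast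
  have 24: "C2 \<Longrightarrow> C4" unfolding C2_def C4_def \<tau>_def X_def using c2_c4[OF assms(1)] by blast
  have 45: "C4 \<Longrightarrow> C5" unfolding C4_def C5_def \<tau>_def X_def using c4_c5[OF assms(1)] by blast
  have 51: "C5 \<Longrightarrow> C1" unfolding C5_def C1_def \<tau>_def X_def using c5_c1[OF assms(1)] by blast
  show ?thesis using 13 32 24 45 51 by blast
qed

end
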